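(* In a RiFle assignment game, the set of stable payoffs (viewed as a subset of $\mathbb R^n\times\mathbb R^n$) is compact.
   Context: A RiFle assignment game consists of two disjoint sets of agents $P=\{p_1,\dots,p_n\}$ and $Q=\{q_1,\dots,q_n\}$, a pair of nonnegative real numbers $(\beta_{ij},\gamma_{ij})$ for every pair $(p_i,q_j)\in P\times Q$ (write $\alpha_{ij}=\beta_{ij}+\gamma_{ij}$), and a designation of every agent as rigid or flexible. Let $\mathcal R$ be the set of pairs with at least one rigid agent and $\mathcal F$ the set of pairs with both agents flexible. An outcome $(\bar u,\bar v;\mu)$ consists of a matching $\mu$ between $P$ and $Q$ (write $p_i\stackrel{\mu}{\longleftrightarrow} q_j$) and payoff vectors $\bar u,\bar v\in\mathbb R^n$. It is feasible if: (1) $u_i\ge0$, $v_j\ge0$; (2) if a rigid $p_i$ is matched to $q_j$ then $u_i=\beta_{ij}$ and, if $q_j$ is flexible, $v_j\ge\gamma_{ij}$; symmetrically for a rigid $q_j$ matched to $p_i$: $v_j=\gamma_{ij}$ and, if $p_i$ is flexible, $u_i\ge\beta_{ij}$; (3) $\sum_iu_i+\sum_jv_j=\sum_{p_i\stackrel{\mu}{\longleftrightarrow}q_j}\alpha_{ij}$. It is stable if feasible and $u_i+v_j\ge\alpha_{ij}$ for $(p_i,q_j)\in\mathcal F$ and ($u_i\ge\beta_{ij}$ or $v_j\ge\gamma_{ij}$) for $(p_i,q_j)\in\mathcal R$. A payoff $(\bar u,\bar v)$ is stable if $(\bar u,\bar v;\mu)$ is a stable outcome for some matching $\mu$. *)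

theory Defs
  imports "HOL-Analysis.Analysis"
begin

(* Agents p_i and q_j are indexed by a finite type 'n (so n = CARD('n)).
   rigP i / rigQ j = True means p_i / q_j is rigid (False = flexible).
   A matching is a set M of pairs (i,j), meaning p_i <-> q_j, in which every
   agent occurs in at most one pair. *)

definition is_matching :: "('n \<times> 'n) set \<Rightarrow> bool" where
  "is_matching M \<longleftrightarrow>
     (\<forall>i j i' j'. (i, j) \<in> M \<longrightarrow> (i', j') \<in> M \<longrightarrow> (i = i' \<longleftrightarrow> j = j'))"

definition feasible_outcome ::
  "('n::finite \<Rightarrow> bool) \<Rightarrow> ('n \<Rightarrow> bool) \<Rightarrow> ('n \<Rightarrow> 'n \<Rightarrow> real) \<Rightarrow> ('n \<Rightarrow> 'n \<Rightarrow> real)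
   \<Rightarrow> real^'n \<Rightarrow> real^'n \<Rightarrow> ('n \<times> 'n) set \<Rightarrow> bool" where
  "feasible_outcome rigP rigQ \<beta> \<gamma> u v M \<longleftrightarrow>
     is_matching M \<and>
     (\<forall>i. u $ i \<ge> 0) \<and> (\<forall>j. v $ j \<ge> 0) \<and>
     (\<forall>i j. (i, j) \<in> M \<longrightarrow>
        (rigP i \<longrightarrow> u $ i = \<beta> i j \<and> (\<not> rigQ j \<longrightarrow> v $ j \<ge> \<gamma> i j)) \<and>
        (rigQ j \<longrightarrow> v $ j = \<gamma> i j \<and> (\<not> rigP i \<longrightarrow> u $ i \<ge> \<beta> i j))) \<and>
     (\<Sum>i\<in>UNIV. u $ i) + (\<Sum>j\<in>UNIV. v $ j) = (\<Sum>(i, j)\<in>M. \<beta> i j + \<gamma> i j)"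

definition stable_outcome ::
  "('n::finite \<Rightarrow> bool) \<Rightarrow> ('n \<Rightarrow> bool) \<Rightarrow> ('n \<Rightarrow> 'n \<Rightarrow> real) \<Rightarrow> ('n \<Rightarrow> 'n \<Rightarrow> real)
   \<Rightarrow> real^'n \<Rightarrow> real^'n \<Rightarrow> ('n \<times> 'n) set \<Rightarrow> bool" where
  "stable_outcome rigP rigQ \<beta> \<gamma> u v M \<longleftrightarrow>
     feasible_outcome rigP rigQ \<beta> \<gamma> u v M \<and>
     (\<forall>i j. \<not> rigP i \<and> \<not> rigQ j \<longrightarrow> u $ i + v $ j \<ge> \<beta> i j + \<gamma> i j) \<and>
     (\<forall>i j. rigP i \<or> rigQ j \<longrightarrow> u $ i \<ge> \<beta> i j \<or> v $ j \<ge> \<gamma> i j)"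

definition stable_payoffs ::
  "('n::finite \<Rightarrow> bool) \<Rightarrow> ('n \<Rightarrow> bool) \<Rightarrow> ('n \<Rightarrow> 'n \<Rightarrow> real) \<Rightarrow> ('n \<Rightarrow> 'n \<Rightarrow> real)
   \<Rightarrow> ((real^'n) \<times> (real^'n)) set" where
  "stable_payoffs rigP rigQ \<beta> \<gamma> = {(u, v). \<exists>M. stable_outcome rigP rigQ \<beta> \<gamma> u v M}"

end

theory Submission
  imports Defs
begin

lemma closed_SM:
  fixes rigP rigQ :: "'n::finite \<Rightarrow> bool"
    and \<beta> \<gamma> :: "'n \<Rightarrow> 'n \<Rightarrow> real"
  shows "closed {x. stable_outcome rigP rigQ \<beta> \<gamma> (fst x) (snd x) M}"
  unfolding stable_outcome_def feasible_outcome_def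
  by (intro closed_Collect_conj closed_Collect_all closed_Collect_imp closed_Collect_disj
      closed_Collect_le closed_Collect_eq closed_Collect_const open_Collect_const
      continuous_intros)

lemma bounded_SM:
  fixes rigP rigQ :: "'n::finite \<Rightarrow> bool"
    and \<beta> \<gamma> :: "'n \<Rightarrow> 'n \<Rightarrow> real"
  shows "bounded {x. stable_outcome rigP rigQ \<beta> \<gamma> (fst x) (snd x) M}"
proof -
  define C where "C = (\<Sum>(i, j)\<in>M. \<beta> i j + \<gamma> i j)"
  have cu: "\<bar>u $ i\<bar> \<le> C" and cv: "\<bar>v $ i\<bar> \<le> C"
    if "stable_outcome rigP rigQ \<beta> \<gamma> u v M" for u v i
  proof -
    from that have f: "(\<forall>i. u $ i \<ge> 0)" "(\<forall>j. v $ j \<ge> 0)"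
      "(\<Sum>i\<in>UNIV. u $ i) + (\<Sum>j\<in>UNIV. v $ j) = C"
      unfolding stable_outcome_def feasible_outcome_def C_def by auto
    have s1: "u $ i \<le> (\<Sum>i\<in>UNIV. u $ i)" "v $ i \<le> (\<Sum>i\<in>UNIV. v $ i)"
      using f by (auto intro!: member_le_sum)
    have s2: "0 \<le> (\<Sum>i\<in>UNIV. u $ i)" "0 \<le> (\<Sum>i\<in>UNIV. v $ i)"
      using f by (auto intro!: sum_nonneg)
    show "\<bar>u $ i\<bar> \<le> C" "\<bar>v $ i\<bar> \<le> C" using f s1 s2 by auto
  qed
  show ?thesis unfolding bounded_iff
  proof (intro exI ballI)
    fix x assume "x \<in> {x. stable_outcome rigP rigQ \<beta> \<gamma> (fst x) (snd x) M}"
    then have st: "stable_outcome rigP rigQ \<beta> \<gamma> (fst x) (snd x) M" by simp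
    have "norm x \<le> norm (fst x) + norm (snd x)"
      by (metis norm_Pair_le prod.collapse)
    also have "norm (fst x) \<le> (\<Sum>i\<in>UNIV. \<bar>fst x $ i\<bar>)" by (rule norm_le_l1_cart)
    also have "\<dots> \<le> (\<Sum>i\<in>(UNIV::'n set). C)" using cu[OF st] by (intro sum_mono) auto
    also have "norm (snd x) \<le> (\<Sum>i\<in>UNIV. \<bar>snd x $ i\<bar>)" by (rule norm_le_l1_cart)
    also have "\<dots> \<le> (\<Sum>i\<in>(UNIV::'n set). C)" using cv[OF st] by (intro sum_mono) auto
    finally show "norm x \<le> 2 * (\<Sum>i\<in>(UNIV::'n set). C)" by (simp add: mult.commute)
  qed
qed

theorem lemma4:
  fixes rigP rigQ :: "'n::finite \<Rightarrow> bool"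
    and \<beta> \<gamma> :: "'n \<Rightarrow> 'n \<Rightarrow> real"
  assumes "\<And>i j. \<beta> i j \<ge> 0" and "\<And>i j. \<gamma> i j \<ge> 0"
  shows "compact (stable_payoffs rigP rigQ \<beta> \<gamma>)"
proof -
  have eq: "stable_payoffs rigP rigQ \<beta> \<gamma> =
     (\<Union>M\<in>(UNIV::('n\<times>'n) set set). {x. stable_outcome rigP rigQ \<beta> \<gamma> (fst x) (snd x) M})"
    unfolding stable_payoffs_def by auto
  show ?thesis unfolding eq
    using finite_class.finite_UNIV[where ?'a="('n\<times>'n) set"]
    by (intro compact_UN ballI compact_eq_bounded_closed[THEN iffD2] conjI
        closed_SM bounded_SM)
qed

end
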